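(* Let $\mathbf c:\mathbb R/l\mathbb Z\to\mathbb R^3$ ($l>0$) be an embedded $C^\infty$ regular curve and $C:=\mathbf c(\mathbb R/l\mathbb Z)$. Unless $C$ is a circle, $C$ has at most finitely many symmetries.
   Context: A symmetry of $C$ is an isometry $T$ of $\mathbb R^3$, different from the identity, with $T(C)=C$. *)

theory Defs
  imports "HOL-Analysis.Analysis"
begin

definition curve_deriv :: "nat \<Rightarrow> (real \<Rightarrow> 'a::real_normed_vector) \<Rightarrow> real \<Rightarrow> 'a" where
  "curve_deriv n c = ((\<lambda>f t. vector_derivative f (at t)) ^^ n) c"

definition smooth_curve :: "(real \<Rightarrow> 'a::real_normed_vector) \<Rightarrow> bool" where
  "smooth_curve c \<longleftrightarrow> (\<forall>n t. curve_deriv n c differentiable (at t))"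

definition regular_curve :: "(real \<Rightarrow> 'a::real_normed_vector) \<Rightarrow> bool" where
  "regular_curve c \<longleftrightarrow> (\<forall>t. vector_derivative c (at t) \<noteq> 0)"

text \<open>A map R -> R^3 descending to an injective map on R/lZ:
  c s = c t iff s - t is an integer multiple of l.\<close>
definition embedded_closed_curve :: "real \<Rightarrow> (real \<Rightarrow> 'a) \<Rightarrow> bool" where
  "embedded_closed_curve l c \<longleftrightarrow> (\<forall>s t. c s = c t \<longleftrightarrow> (\<exists>k::int. s - t = of_int k * l))"

definition isometry :: "('a::metric_space \<Rightarrow> 'a) \<Rightarrow> bool" where
  "isometry T \<longleftrightarrow> (\<forall>x y. dist (T x) (T y) = dist x y)"

definition symmetries :: "'a::metric_space set \<Rightarrow> ('a \<Rightarrow> 'a) set" where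
  "symmetries C = {T. isometry T \<and> T \<noteq> id \<and> T ` C = C}"

definition is_circle :: "(real^3) set \<Rightarrow> bool" where
  "is_circle C \<longleftrightarrow> (\<exists>p r n. r > 0 \<and> n \<noteq> 0 \<and> C = {x. dist x p = r \<and> (x - p) \<bullet> n = 0})"

end

theory Submission
  imports Defs
begin


definition orthonormal3 :: "real^3 \<Rightarrow> real^3 \<Rightarrow> real^3 \<Rightarrow> bool" where
  "orthonormal3 u v w \<longleftrightarrow> u \<bullet> u = 1 \<and> v \<bullet> v = 1 \<and> w \<bullet> w = 1 \<and> u \<bullet> v = 0 \<and> u \<bullet> w = 0 \<and> v \<bullet> w = 0"

definition rot :: "real^3 \<Rightarrow> real^3 \<Rightarrow> real^3 \<Rightarrow> real \<Rightarrow> real^3 \<Rightarrow> real^3" where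
  "rot u v w t x = (x \<bullet> u) *\<^sub>R u + (cos t * (x \<bullet> v) - sin t * (x \<bullet> w)) *\<^sub>R v
      + (sin t * (x \<bullet> v) + cos t * (x \<bullet> w)) *\<^sub>R w"

lemma orth_facts:
  assumes "orthonormal3 u v w"
  shows "u \<bullet> u = 1" "v \<bullet> v = 1" "w \<bullet> w = 1" "u \<bullet> v = 0" "u \<bullet> w = 0" "v \<bullet> w = 0"
    "v \<bullet> u = 0" "w \<bullet> u = 0" "w \<bullet> v = 0"
  using assms by (auto simp: orthonormal3_def inner_commute)

lemma frame_expand:
  assumes "orthonormal3 u v w"
  shows "x = (x \<bullet> u) *\<^sub>R u + (x \<bullet> v) *\<^sub>R v + (x \<bullet> w) *\<^sub>R w"
proof (rule ccontr)
  define z where "z = x - ((x \<bullet> u) *\<^sub>R u + (x \<bullet> v) *\<^sub>R v + (x \<bullet> w) *\<^sub>R w)"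
  assume "x \<noteq> (x \<bullet> u) *\<^sub>R u + (x \<bullet> v) *\<^sub>R v + (x \<bullet> w) *\<^sub>R w"
  then have z0: "z \<noteq> 0" by (simp add: z_def)
  note o = orth_facts[OF assms]
  have zo: "z \<bullet> u = 0" "z \<bullet> v = 0" "z \<bullet> w = 0"
    using o by (simp_all add: z_def inner_diff_left inner_add_left)
  have ne: "u \<noteq> 0" "v \<noteq> 0" "w \<noteq> 0" using o by auto
  have d: "u \<noteq> v" "u \<noteq> w" "v \<noteq> w" "z \<noteq> u" "z \<noteq> v" "z \<noteq> w"
    using o zo by auto
  have "pairwise orthogonal {u, v, w, z}"
    using o zo unfolding pairwise_def orthogonal_def by (auto simp: inner_commute[of u z] inner_commute[of v z] inner_commute[of w z])
  moreover have "0 \<notin> {u, v, w, z}" using ne z0 by auto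
  ultimately have "independent {u, v, w, z}"
    by (rule pairwise_orthogonal_independent)
  then have "card {u, v, w, z} \<le> DIM(real^3)"
    using independent_bound by blast
  moreover have "card {u, v, w, z} = 4" using d by auto
  ultimately show False by simp
qed

lemma rot_inner:
  assumes "orthonormal3 u v w"
  shows "rot u v w t x \<bullet> u = x \<bullet> u"
    "rot u v w t x \<bullet> v = cos t * (x \<bullet> v) - sin t * (x \<bullet> w)"
    "rot u v w t x \<bullet> w = sin t * (x \<bullet> v) + cos t * (x \<bullet> w)"
  using orth_facts[OF assms] by (auto simp: rot_def inner_add_left inner_diff_left)

lemma rot_add:
  assumes "orthonormal3 u v w"
  shows "rot u v w a (rot u v w b x) = rot u v w (a + b) x"
proof -
  have e1: "cos a * (cos b * (x \<bullet> v) - sin b * (x \<bullet> w)) - sin a * (sin b * (x \<bullet> v) + cos b * (x \<bullet> w))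
     = cos (a + b) * (x \<bullet> v) - sin (a + b) * (x \<bullet> w)"
    by (simp add: cos_add sin_add algebra_simps)
  have e2: "sin a * (cos b * (x \<bullet> v) - sin b * (x \<bullet> w)) + cos a * (sin b * (x \<bullet> v) + cos b * (x \<bullet> w))
     = sin (a + b) * (x \<bullet> v) + cos (a + b) * (x \<bullet> w)"
    by (simp add: cos_add sin_add algebra_simps)
  show ?thesis
    unfolding rot_def[of u v w a] rot_inner[OF assms] e1 e2
    by (simp add: rot_def)
qed

lemma rot_pow:
  assumes "orthonormal3 u v w"
  shows "(rot u v w t ^^ k) x = rot u v w (real k * t) x"
proof (induction k)
  case 0
  then show ?case using frame_expand[OF assms, of x] by (simp add: rot_def)
next
  case (Suc k)
  then show ?case using rot_add[OF assms] by (simp add: algebra_simps)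
qed



lemma orth_inner:
  fixes R :: "real^3^3"
  assumes "orthogonal_matrix R"
  shows "(R *v x) \<bullet> (R *v y) = x \<bullet> y"
proof -
  have "orthogonal_transformation ((*v) R)"
    using assms by (simp add: orthogonal_transformation_matrix)
  then show ?thesis unfolding orthogonal_transformation_def by blast
qed

lemma my_matrix_sub_ldistrib: "(A ** (B - C)) = (A ** B) - (A ** (C::real^3^3))" for A :: "real^3^3"
  by (vector matrix_matrix_mult_def sum_subtractf[symmetric] field_simps)

lemma det_neg3: "det (- A) = - det (A::real^3^3)"
  by (simp add: det_3 algebra_simps)

lemma transpose_diff_mat: "transpose (mat 1 - A) = mat 1 - transpose (A::real^3^3)"
  by (simp add: vec_eq_iff transpose_def mat_def)

lemma transpose_add_mat: "transpose (mat 1 + A) = mat 1 + transpose (A::real^3^3)"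
  by (simp add: vec_eq_iff transpose_def mat_def)

lemma det_zero_kernel:
  fixes M :: "real^3^3"
  assumes "det M = 0"
  shows "\<exists>x. x \<noteq> 0 \<and> M *v x = 0"
proof -
  have "\<not> invertible M" using assms invertible_det_nz by blast
  then have "\<not> (\<exists>B. B ** M = mat 1)" using invertible_left_inverse by blast
  then show ?thesis using matrix_left_invertible_ker by blast
qed

lemma fixed_vector:
  fixes R :: "real^3^3"
  assumes orth: "orthogonal_matrix R" and near: "\<forall>x. norm (R *v x - x) \<le> \<delta> * norm x" and "\<delta> < 2"
  shows "\<exists>x. x \<noteq> 0 \<and> R *v x = x"
proof -
  have RT: "R ** transpose R = mat 1" using orth by (simp add: orthogonal_matrix_def)
  have e1: "R - mat 1 = R ** transpose (mat 1 - R)"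
    by (simp add: transpose_diff_mat my_matrix_sub_ldistrib RT)
  have e2: "R + mat 1 = R ** transpose (mat 1 + R)"
    by (metis transpose_add_mat matrix_add_ldistrib RT matrix_mul_rid add.commute)
  have d1: "det (R - mat 1) = - det R * det (R - mat 1)"
  proof -
    have a: "det (R - mat 1) = det R * det (mat 1 - R)" by (subst e1) (simp add: det_mul)
    have b: "det (mat 1 - R) = - det (R - mat 1)" using det_neg3[of "R - mat 1"] by simp
    show ?thesis using a b by (metis mult_minus_right mult_minus_left)
  qed
  have d2: "det (R + mat 1) = det R * det (R + mat 1)"
    by (subst e2) (simp add: det_mul add.commute)
  have "det R = 1 \<or> det R = -1" using det_orthogonal_matrix[OF orth] .
  then show ?thesis
  proof
    assume "det R = 1"
    then have "det (R - mat 1) = 0" using d1 by simp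
    then obtain x where x: "x \<noteq> 0" "(R - mat 1) *v x = 0" using det_zero_kernel by blast
    then show ?thesis by (auto simp: matrix_vector_mult_diff_rdistrib)
  next
    assume "det R = -1"
    then have "det (R + mat 1) = 0" using d2 by simp
    then obtain x where x: "x \<noteq> 0" "(R + mat 1) *v x = 0" using det_zero_kernel by blast
    then have "R *v x = - x" by (simp add: matrix_vector_mult_add_rdistrib eq_neg_iff_add_eq_0)
    then have "R *v x - x = - ((2::real) *\<^sub>R x)" by (simp add: scaleR_2)
    then have "norm (R *v x - x) = 2 * norm x" by (simp only: norm_minus_cancel norm_scaleR)
    with near have "2 * norm x \<le> \<delta> * norm x" by metis
    with x \<open>\<delta> < 2\<close> show ?thesis by simp
  qed
qed

lemma frame_exists:
  fixes u :: "real^3"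
  assumes "norm u = 1"
  shows "\<exists>v w. orthonormal3 u v w"
proof -
  have "\<exists>e. cross3 u e \<noteq> 0"
  proof (rule ccontr)
    assume "\<not> ?thesis"
    then have "cross3 u (axis 1 1) = 0" "cross3 u (axis 2 1) = 0" by auto
    then have "u = 0" by (simp add: cross3_simps axis_def forall_3)
    with assms show False by simp
  qed
  then obtain e where e: "cross3 u e \<noteq> 0" by blast
  define v where "v = (1 / norm (cross3 u e)) *\<^sub>R (cross3 u e)"
  have nv: "norm v = 1" using e by (simp add: v_def)
  have uv: "u \<bullet> v = 0" by (simp add: v_def dot_cross_self)
  define w where "w = cross3 u v"
  have "(norm w)\<^sup>2 = 1" unfolding w_def norm_cross using assms nv uv by simp
  then have nw: "norm w = 1" by (smt (verit) norm_ge_zero power2_eq_1_iff)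
  have "u \<bullet> w = 0" "v \<bullet> w = 0" by (simp_all add: w_def dot_cross_self)
  then have "orthonormal3 u v w"
    using assms nv nw uv by (simp add: orthonormal3_def norm_eq_1)
  then show ?thesis by blast
qed

lemma perp_expand:
  assumes "orthonormal3 u v w" "y \<bullet> u = 0"
  shows "y = (y \<bullet> v) *\<^sub>R v + (y \<bullet> w) *\<^sub>R w" "y \<bullet> y = (y \<bullet> v)\<^sup>2 + (y \<bullet> w)\<^sup>2"
proof -
  show e: "y = (y \<bullet> v) *\<^sub>R v + (y \<bullet> w) *\<^sub>R w"
    using frame_expand[OF assms(1), of y] assms(2) by simp
  have "y \<bullet> y = ((y \<bullet> v) *\<^sub>R v + (y \<bullet> w) *\<^sub>R w) \<bullet> ((y \<bullet> v) *\<^sub>R v + (y \<bullet> w) *\<^sub>R w)"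
    using e by simp
  also have "\<dots> = (y \<bullet> v)\<^sup>2 + (y \<bullet> w)\<^sup>2"
    using orth_facts[OF assms(1)] by (simp add: inner_add_left inner_add_right power2_eq_square)
  finally show "y \<bullet> y = (y \<bullet> v)\<^sup>2 + (y \<bullet> w)\<^sup>2" .
qed

lemma lin3:
  fixes R :: "real^3^3"
  shows "R *v (a *\<^sub>R x + b *\<^sub>R y + c *\<^sub>R z) = a *\<^sub>R (R *v x) + b *\<^sub>R (R *v y) + c *\<^sub>R (R *v z)"
  by (simp add: matrix_vector_right_distrib matrix_vector_mult_scaleR)

lemma near_id_rotation:
  fixes R :: "real^3^3"
  assumes orth: "orthogonal_matrix R" and near: "\<forall>x. norm (R *v x - x) \<le> \<delta> * norm x"
    and d0: "0 \<le> \<delta>" and d1: "\<delta> < 1" and ne: "R \<noteq> mat 1"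
  shows "\<exists>u v w t. orthonormal3 u v w \<and> 0 < t \<and> t \<le> pi \<and> 2 - 2 * cos t \<le> \<delta>\<^sup>2
     \<and> (\<forall>x. R *v x = rot u v w t x)"
proof -
  obtain x0 where x0: "x0 \<noteq> 0" "R *v x0 = x0" using fixed_vector[OF orth near] d1 by auto
  define u where "u = (1 / norm x0) *\<^sub>R x0"
  have nu: "norm u = 1" using x0 by (simp add: u_def)
  have Ru: "R *v u = u" using x0 by (simp add: u_def matrix_vector_mult_scaleR)
  obtain v w0 where fr: "orthonormal3 u v w0" using frame_exists[OF nu] by blast
  note o = orth_facts[OF fr]
  have unit_bound: "(norm (R *v y - y))\<^sup>2 \<le> \<delta>\<^sup>2" if "norm y = 1" for y
  proof -
    have "norm (R *v y - y) \<le> \<delta>" using near that by (metis mult.right_neutral)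
    then show ?thesis by (simp add: power_mono)
  qed
  have Rvu: "(R *v v) \<bullet> u = 0" using orth_inner[OF orth, of v u] Ru o by simp
  have Rwu: "(R *v w0) \<bullet> u = 0" using orth_inner[OF orth, of w0 u] Ru o by simp
  define c where "c = (R *v v) \<bullet> v"
  define s where "s = (R *v v) \<bullet> w0"
  define a where "a = (R *v w0) \<bullet> v"
  define b where "b = (R *v w0) \<bullet> w0"
  have Rv: "R *v v = c *\<^sub>R v + s *\<^sub>R w0" using perp_expand(1)[OF fr Rvu] by (simp add: c_def s_def)
  have Rw: "R *v w0 = a *\<^sub>R v + b *\<^sub>R w0" using perp_expand(1)[OF fr Rwu] by (simp add: a_def b_def)
  have cs: "c\<^sup>2 + s\<^sup>2 = 1" using perp_expand(2)[OF fr Rvu] orth_inner[OF orth, of v v] o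
    by (simp add: c_def s_def)
  have ab: "a\<^sup>2 + b\<^sup>2 = 1" using perp_expand(2)[OF fr Rwu] orth_inner[OF orth, of w0 w0] o
    by (simp add: a_def b_def)
  have "(R *v w0) \<bullet> (R *v v) = 0" using orth_inner[OF orth, of w0 v] o by simp
  then have acbs: "a * c + b * s = 0" unfolding Rv Rw using o
    by (simp add: inner_add_left inner_add_right mult.commute)
  define k where "k = b * c - a * s"
  have ak: "a = - k * s"
  proof -
    have "a = a * (c\<^sup>2 + s\<^sup>2)" using cs by simp
    also have "\<dots> = c * (a * c + b * s) - (b * c - a * s) * s" by (simp add: power2_eq_square algebra_simps)
    finally show ?thesis using acbs by (simp add: k_def algebra_simps)
  qed
  have bk: "b = k * c"
  proof -
    have "b = b * (c\<^sup>2 + s\<^sup>2)" using cs by simp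
    also have "\<dots> = s * (a * c + b * s) + (b * c - a * s) * c" by (simp add: power2_eq_square algebra_simps)
    finally show ?thesis using acbs by (simp add: k_def algebra_simps)
  qed
  have "a\<^sup>2 + b\<^sup>2 = k\<^sup>2 * (c\<^sup>2 + s\<^sup>2)"
    by (simp only: ak bk) (simp add: power2_eq_square algebra_simps)
  then have k2: "k\<^sup>2 = 1" using ab cs by simp
  have nv: "norm v = 1" "norm w0 = 1" using o by (simp_all add: norm_eq_1)
  have dv: "(norm (R *v v - v))\<^sup>2 = (c - 1)\<^sup>2 + s\<^sup>2"
  proof -
    have e: "R *v v - v = (c - 1) *\<^sub>R v + s *\<^sub>R w0" by (simp add: Rv algebra_simps)
    show ?thesis unfolding power2_norm_eq_inner e using o by (simp add: inner_add_left inner_add_right power2_eq_square)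
  qed
  have dw: "(norm (R *v w0 - w0))\<^sup>2 = a\<^sup>2 + (b - 1)\<^sup>2"
  proof -
    have e: "R *v w0 - w0 = a *\<^sub>R v + (b - 1) *\<^sub>R w0" by (simp add: Rw algebra_simps)
    show ?thesis unfolding power2_norm_eq_inner e using o by (simp add: inner_add_left inner_add_right power2_eq_square)
  qed
  have "k = 1"
  proof (rule ccontr)
    assume "k \<noteq> 1"
    with k2 have "k = -1" by (simp add: power2_eq_1_iff)
    then have "a = s" "b = - c" using ak bk by auto
    then have "(norm (R *v v - v))\<^sup>2 + (norm (R *v w0 - w0))\<^sup>2 = 4"
      using dv dw cs by (simp add: power2_eq_square algebra_simps)
    moreover have "\<delta>\<^sup>2 < 1" using d0 d1 by (simp add: power_less_one_iff abs_square_less_1)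
    ultimately show False using unit_bound[OF nv(1)] unit_bound[OF nv(2)] by linarith
  qed
  then have ab': "a = - s" "b = c" using ak bk by auto
  define w where "w = (if s \<ge> 0 then w0 else - w0)"
  define s' where "s' = \<bar>s\<bar>"
  have fr': "orthonormal3 u v w" using fr by (auto simp: w_def orthonormal3_def)
  have Rv': "R *v v = c *\<^sub>R v + s' *\<^sub>R w" using Rv by (auto simp: w_def s'_def)
  have Rw': "R *v w = (- s') *\<^sub>R v + c *\<^sub>R w" using Rw ab'
    by (auto simp: w_def s'_def matrix_vector_mult_scaleR[of R "-1" w0, simplified] algebra_simps)
  have "c\<^sup>2 \<le> 1" using cs zero_le_power2[of s] by linarith
  then have "\<bar>c\<bar> \<le> 1" using abs_square_le_1 by blast
  then have cb: "-1 \<le> c" "c \<le> 1" by auto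
  define t where "t = arccos c"
  have ct: "cos t = c" using cb by (simp add: t_def)
  have "1 - c\<^sup>2 = s\<^sup>2" using cs by simp
  then have st: "sin t = s'" using \<open>\<bar>c\<bar> \<le> 1\<close> unfolding t_def s'_def
    by (simp only: sin_arccos_abs real_sqrt_abs)
  have tb: "0 \<le> t" "t \<le> pi" using arccos_bounded[OF cb] by (auto simp: t_def)
  have Rx: "R *v x = rot u v w t x" for x
  proof -
    have "R *v x = R *v ((x \<bullet> u) *\<^sub>R u + (x \<bullet> v) *\<^sub>R v + (x \<bullet> w) *\<^sub>R w)"
      using arg_cong[where f="(*v) R", OF frame_expand[OF fr', of x]] .
    also have "\<dots> = (x \<bullet> u) *\<^sub>R u + (x \<bullet> v) *\<^sub>R (c *\<^sub>R v + s' *\<^sub>R w) + (x \<bullet> w) *\<^sub>R ((- s') *\<^sub>R v + c *\<^sub>R w)"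
      by (simp only: lin3 Ru Rv' Rw')
    also have "\<dots> = rot u v w t x"
      by (simp add: rot_def ct st algebra_simps)
    finally show ?thesis .
  qed
  have "t \<noteq> 0"
  proof
    assume "t = 0"
    then have "c = 1" "s' = 0" using ct st by auto
    then have "R *v x = mat 1 *v x" for x using Rx[of x] frame_expand[OF fr', of x] \<open>t = 0\<close>
      by (simp add: rot_def)
    then have "R = mat 1" by (simp add: matrix_eq)
    with ne show False by simp
  qed
  with tb have "0 < t" by simp
  moreover have "2 - 2 * cos t \<le> \<delta>\<^sup>2"
    using dv cs unit_bound[OF nv(1)] ct by (simp add: power2_eq_square algebra_simps)
  ultimately show ?thesis using fr' tb Rx by blast
qed



lemma parallelogram_mid:
  fixes x q1 q2 :: "real^3"
  shows "(dist x ((1/2) *\<^sub>R (q1 + q2)))\<^sup>2 = ((dist x q1)\<^sup>2 + (dist x q2)\<^sup>2) / 2 - (dist q1 q2)\<^sup>2 / 4"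
  by (simp add: dist_norm power2_norm_eq_inner inner_diff_left inner_diff_right inner_add_left
      inner_add_right inner_commute algebra_simps divide_simps)

lemma cheb_center:
  fixes C :: "(real^3) set"
  assumes cC: "compact C" and neC: "C \<noteq> {}"
  shows "\<exists>p. \<forall>T. isometry T \<and> T ` C = C \<longrightarrow> T p = p"
proof -
  define r where "r q = (SUP x\<in>C. dist x q)" for q
  have bdd: "bdd_above ((\<lambda>x. dist x q) ` C)" for q
  proof -
    have "compact ((\<lambda>x. dist x q) ` C)"
      by (rule compact_continuous_image[OF _ cC]) (intro continuous_intros)
    then show ?thesis by (intro bounded_imp_bdd_above compact_imp_bounded)
  qed
  have r_ub: "dist x q \<le> r q" if "x \<in> C" for x q
    unfolding r_def using that bdd by (intro cSUP_upper) auto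
  have r_least: "r q \<le> \<rho>" if "\<And>x. x \<in> C \<Longrightarrow> dist x q \<le> \<rho>" for q \<rho>
    unfolding r_def using that neC by (intro cSUP_least) auto
  have r_lip: "r q \<le> r q' + dist q q'" for q q'
  proof (rule r_least)
    fix x assume "x \<in> C"
    then have "dist x q' \<le> r q'" by (rule r_ub)
    then show "dist x q \<le> r q' + dist q q'" using dist_triangle[of x q q'] by (simp add: dist_commute)
  qed
  have "1-lipschitz_on UNIV r"
  proof (rule lipschitz_onI)
    fix q q' :: "real^3"
    show "dist (r q) (r q') \<le> 1 * dist q q'"
      using r_lip[of q q'] r_lip[of q' q] by (simp add: dist_real_def dist_commute abs_le_iff)
  qed simp
  then have contr: "continuous_on UNIV r" by (rule lipschitz_on_continuous_on)
  obtain x0 where x0: "x0 \<in> C" using neC by blast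
  obtain qs where qs: "qs \<in> cball x0 (r x0)" "\<And>y. y \<in> cball x0 (r x0) \<Longrightarrow> r qs \<le> r y"
    using continuous_attains_inf[of "cball x0 (r x0)" r] contr
    by (metis compact_cball continuous_on_subset empty_iff mem_cball r_ub x0 dist_self subset_UNIV
        centre_in_cball dist_nz order_trans zero_le_dist)
  have gmin: "r qs \<le> r y" for y
  proof (cases "y \<in> cball x0 (r x0)")
    case True then show ?thesis by (rule qs)
  next
    case False
    then have "r x0 < dist x0 y" by simp
    also have "\<dots> \<le> r y" by (rule r_ub[OF x0])
    finally have "r x0 < r y" .
    moreover have "0 \<le> r x0" using r_ub[OF x0, of x0] by simp
    ultimately show ?thesis using qs(2)[of x0] by simp
  qed
  have uniq: "q = qs" if "\<And>y. r q \<le> r y" for q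
  proof (rule ccontr)
    assume ne: "q \<noteq> qs"
    define m where "m = r qs"
    have rq: "r q = m" using that[of qs] gmin[of q] by (simp add: m_def)
    have m0: "0 \<le> m" using r_ub[OF x0, of qs] by (simp add: m_def) (meson order_trans zero_le_dist)
    define d where "d = dist q qs"
    have d0: "0 < d" using ne by (simp add: d_def)
    define mid where "mid = (1/2) *\<^sub>R (q + qs)"
    have "(dist x mid)\<^sup>2 \<le> m\<^sup>2 - d\<^sup>2 / 4" if "x \<in> C" for x
    proof -
      have "dist x q \<le> m" "dist x qs \<le> m" using r_ub[OF that, of q] r_ub[OF that, of qs] rq by (auto simp: m_def)
      then have "(dist x q)\<^sup>2 \<le> m\<^sup>2" "(dist x qs)\<^sup>2 \<le> m\<^sup>2" by (simp_all add: power_mono)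
      then show ?thesis unfolding mid_def parallelogram_mid d_def by simp
    qed
    then have "dist x mid \<le> sqrt (m\<^sup>2 - d\<^sup>2 / 4)" if "x \<in> C" for x
      using that by (metis real_le_rsqrt)
    then have "r mid \<le> sqrt (m\<^sup>2 - d\<^sup>2 / 4)" by (rule r_least)
    also have "\<dots> < m"
    proof -
      have "m\<^sup>2 - d\<^sup>2 / 4 < m\<^sup>2" using d0 by simp
      then have "sqrt (m\<^sup>2 - d\<^sup>2 / 4) < sqrt (m\<^sup>2)" by (rule real_sqrt_less_mono)
      then show ?thesis using m0 by simp
    qed
    finally show False using gmin[of mid] by (simp add: m_def)
  qed
  have "T qs = qs" if T: "isometry T" "T ` C = C" for T
  proof -
    have "r (T q) = r q" for q
    proof -
      have "r (T q) = (SUP x\<in>T ` C. dist x (T q))" unfolding r_def using T(2) by simp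
      also have "\<dots> = (SUP y\<in>C. dist (T y) (T q))" by (simp add: image_image)
      also have "\<dots> = r q" unfolding r_def using T(1) by (simp add: isometry_def)
      finally show ?thesis .
    qed
    then have "r (T qs) \<le> r y" for y using gmin[of y] by simp
    then show ?thesis by (rule uniq)
  qed
  then show ?thesis by blast
qed



definition periodic_inj :: "real \<Rightarrow> (real \<Rightarrow> 'a) \<Rightarrow> bool" where
  "periodic_inj L g \<longleftrightarrow> (\<forall>s t. g s = g t \<longleftrightarrow> (\<exists>k::int. s - t = of_int k * L))"

lemma periodic_inj_shift:
  assumes "periodic_inj L g" "L > 0"
  shows "\<exists>s'. a \<le> s' \<and> s' < a + L \<and> g s' = g s"
proof -
  define k where "k = \<lfloor>(s - a) / L\<rfloor>"
  define s' where "s' = s - of_int k * L"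
  have "of_int k \<le> (s - a) / L" "(s - a) / L < of_int k + 1" unfolding k_def by linarith+
  then have "of_int k * L \<le> s - a" "s - a < (of_int k + 1) * L" using assms(2)
    by (simp_all add: field_simps)
  then have "a \<le> s'" "s' < a + L" by (simp_all add: s'_def algebra_simps)
  moreover have "g s' = g s" using assms(1) unfolding periodic_inj_def s'_def
    by (metis add_diff_cancel_left' diff_diff_eq2 diff_minus_eq_add minus_diff_eq mult_minus_left of_int_minus)
  ultimately show ?thesis by blast
qed

lemma periodic_inj_close:
  assumes "periodic_inj L g" "L > 0" "g s = g t" "\<bar>s - t\<bar> < L"
  shows "s = t"
proof -
  obtain k :: int where k: "s - t = of_int k * L" using assms(1,3) unfolding periodic_inj_def by blast
  then have "\<bar>of_int k\<bar> * L < L" using assms(2,4) by (simp add: abs_mult)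
  then have "\<bar>of_int k\<bar> < (1::real)" using assms(2) by simp
  then have "k = 0" by linarith
  then show ?thesis using k by simp
qed

lemma periodic_inj_range:
  assumes "periodic_inj L g" "L > 0"
  shows "range g = g ` {a..a+L}"
proof
  show "range g \<subseteq> g ` {a..a+L}"
  proof
    fix z assume "z \<in> range g"
    then obtain s where "z = g s" by blast
    then show "z \<in> g ` {a..a+L}" using periodic_inj_shift[OF assms, of a s]
      by (metis atLeastAtMost_iff image_eqI less_eq_real_def)
  qed
qed auto

lemma periodic_inj_punctured:
  assumes "periodic_inj L g" "L > 0" "continuous_on UNIV g"
  shows "connected (range g - {g t})"
proof -
  have "range g - {g t} = g ` {t<..<t+L}"
  proof
    show "range g - {g t} \<subseteq> g ` {t<..<t+L}"
    proof
      fix z assume z: "z \<in> range g - {g t}"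
      then obtain s where "z = g s" by blast
      then obtain s' where s': "t \<le> s'" "s' < t + L" "g s' = z" using periodic_inj_shift[OF assms(1,2), of t s] by metis
      then have "s' \<noteq> t" using z by auto
      then show "z \<in> g ` {t<..<t+L}" using s' by auto
    qed
    show "g ` {t<..<t+L} \<subseteq> range g - {g t}"
    proof
      fix z assume "z \<in> g ` {t<..<t+L}"
      then obtain s where s: "t < s" "s < t + L" "z = g s" by auto
      have "g s \<noteq> g t"
      proof
        assume "g s = g t"
        then have "s = t" using periodic_inj_close[OF assms(1,2)] s by fastforce
        with s show False by simp
      qed
      then show "z \<in> range g - {g t}" using s by auto
    qed
  qed
  moreover have "connected (g ` {t<..<t+L})"
    by (rule connected_continuous_image[OF continuous_on_subset[OF assms(3)]]) auto
  ultimately show ?thesis by (simp only:)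
qed

lemma periodic_inj_two:
  assumes "periodic_inj L g" "L > 0"
  shows "g 0 \<noteq> g (L/2)"
  using periodic_inj_close[OF assms, of 0 "L/2"] assms(2) by auto

lemma no_inj_into_line:
  fixes S :: "'a::topological_space set" and P :: "'a \<Rightarrow> real"
  assumes conS: "connected S" and punct: "\<And>y. y \<in> S \<Longrightarrow> connected (S - {y})"
    and ab: "a \<in> S" "b \<in> S" "a \<noteq> b"
    and contP: "continuous_on S P" and injP: "inj_on P S"
  shows False
proof -
  have "P a \<noteq> P b" using injP ab by (meson inj_onD)
  then obtain a' b' where ab': "a' \<in> S" "b' \<in> S" "P a' < P b'"
    using ab by (metis linorder_neqE_linordered_idom)
  define m where "m = (P a' + P b') / 2"
  have "connected (P ` S)" by (rule connected_continuous_image[OF contP conS])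
  moreover have mb: "P a' \<le> m" "m \<le> P b'" using ab'(3) by (simp_all add: m_def)
  ultimately have "m \<in> P ` S" using ab' unfolding connected_iff_interval by blast
  then obtain y where y: "y \<in> S" "P y = m" by blast
  have "connected (P ` (S - {y}))"
    by (rule connected_continuous_image[OF continuous_on_subset[OF contP] punct[OF y(1)]]) auto
  moreover have "a' \<in> S - {y}" "b' \<in> S - {y}" using y ab' by (auto simp: m_def)
  ultimately have "m \<in> P ` (S - {y})" unfolding connected_iff_interval
    using mb by blast
  then obtain z where "z \<in> S" "z \<noteq> y" "P z = m" by blast
  then show False using injP y by (metis inj_onD)
qed

lemma periodic_inj_no_line:
  fixes g :: "real \<Rightarrow> 'a::t2_space" and P :: "'a \<Rightarrow> real"
  assumes "periodic_inj L g" "L > 0" "continuous_on UNIV g"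
    and "continuous_on (range g) P" "inj_on P (range g)"
  shows False
proof (rule no_inj_into_line)
  show "connected (range g)" by (rule connected_continuous_image[OF assms(3)]) simp
  show "connected (range g - {y})" if "y \<in> range g" for y
    using that periodic_inj_punctured[OF assms(1-3)] by blast
  show "g 0 \<in> range g" "g (L/2) \<in> range g" by auto
  show "g 0 \<noteq> g (L/2)" by (rule periodic_inj_two[OF assms(1,2)])
qed (use assms in auto)

lemma periodic_inj_sub_eq:
  fixes c g :: "real \<Rightarrow> real^3"
  assumes pc: "periodic_inj l c" and l0: "l > 0" and cc: "continuous_on UNIV c"
    and pg: "periodic_inj L g" and L0: "L > 0" and cg: "continuous_on UNIV g"
    and sub: "range g \<subseteq> range c"
  shows "range c \<subseteq> range g"
proof (rule ccontr)
  assume "\<not> range c \<subseteq> range g"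
  then obtain t0 where t0: "c t0 \<notin> range g" by blast
  define K where "K = {t0..t0+l} \<inter> c -` range g"
  have "compact (g ` {0..0+L})" by (rule compact_continuous_image[OF continuous_on_subset[OF cg]]) auto
  then have "closed (range g)" using periodic_inj_range[OF pg L0, of 0] by (simp add: compact_imp_closed)
  then have "closed (c -` range g)"
    by (rule continuous_closed_vimage) (use cc continuous_on_eq_continuous_at in blast)
  then have cK: "compact K" unfolding K_def by (intro compact_Int_closed) auto
  have ct0: "c (t0 + l) = c t0" using pc unfolding periodic_inj_def by (metis add_diff_cancel_left' mult_1 of_int_1)
  have Kin: "t0 < t \<and> t < t0 + l" if "t \<in> K" for t
  proof -
    have "t \<noteq> t0" "t \<noteq> t0 + l" using that t0 ct0 by (auto simp: K_def) (metis rangeI)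
    then show ?thesis using that by (auto simp: K_def)
  qed
  have inj: "inj_on c K"
  proof (rule inj_onI)
    fix s t assume "s \<in> K" "t \<in> K" "c s = c t"
    then show "s = t" using periodic_inj_close[OF pc l0, of s t] Kin[of s] Kin[of t] by auto
  qed
  have cKg: "c ` K = range g"
  proof
    show "c ` K \<subseteq> range g" by (auto simp: K_def)
    show "range g \<subseteq> c ` K"
    proof
      fix z assume z: "z \<in> range g"
      then obtain s where "z = c s" using sub by blast
      then obtain s' where s': "t0 \<le> s'" "s' < t0 + l" "c s' = z" using periodic_inj_shift[OF pc l0, of t0 s] by metis
      then have "s' \<in> K" using z by (auto simp: K_def)
      then show "z \<in> c ` K" using s' by blast
    qed
  qed
  define P where "P = inv_into K c"
  have "continuous_on (c ` K) P" unfolding P_def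
    by (rule continuous_on_inv[OF continuous_on_subset[OF cc] cK]) (auto simp: inv_into_f_f[OF inj])
  then have contP: "continuous_on (range g) P" using cKg by simp
  have injP: "inj_on P (range g)" unfolding P_def using cKg by (intro inj_on_inv_into) simp
  show False by (rule periodic_inj_no_line[OF pg L0 cg contP injP])
qed



lemma mat_vec_bound:
  fixes M :: "real^3^3"
  shows "norm (M *v x) \<le> 9 * norm M * norm x"
proof -
  have "\<bar>M $ i $ j\<bar> \<le> norm M" for i j
    using component_le_norm_cart[of "M $ i" j] Finite_Cartesian_Product.norm_nth_le[of M i] by simp
  then have "onorm ((*v) M) \<le> real CARD(3) * real CARD(3) * norm M"
    by (rule onorm_le_matrix_component)
  then have "onorm ((*v) M) \<le> 9 * norm M" by simp
  moreover have "norm (M *v x) \<le> onorm ((*v) M) * norm x"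
    by (rule onorm[OF matrix_vector_mul_bounded_linear])
  ultimately show ?thesis by (meson mult_right_mono norm_ge_zero order_trans)
qed

lemma orth_norm:
  fixes R :: "real^3^3"
  assumes "orthogonal_matrix R"
  shows "norm (R *v x) = norm x"
  using orth_inner[OF assms, of x x] by (simp add: norm_eq_sqrt_inner)

lemma orth_mat_bounded: "bounded {A :: real^3^3. orthogonal_matrix A}"
proof -
  have "norm A \<le> 3" if "orthogonal_matrix A" for A :: "real^3^3"
  proof -
    have r: "norm (A $ i) = 1" for i
      using that unfolding orthogonal_matrix_orthonormal_rows by (simp add: row_def)
    have "norm A = L2_set (\<lambda>i. norm (A $ i)) UNIV" by (simp add: norm_vec_def)
    also have "\<dots> \<le> (\<Sum>i\<in>UNIV. norm (A $ i))" by (rule L2_set_le_sum) simp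
    also have "\<dots> = 3" using r by simp
    finally show ?thesis .
  qed
  then show ?thesis unfolding bounded_iff by blast
qed

lemma orth_preserve_inv:
  fixes A :: "real^3^3"
  assumes "orthogonal_matrix A" "(*v) A ` C0 = C0"
  shows "(*v) (transpose A) ` C0 = C0"
proof -
  have TA: "transpose A *v (A *v z) = z" for z
    using assms(1) by (simp add: matrix_vector_mul_assoc orthogonal_matrix_def)
  show ?thesis
  proof
    show "(*v) (transpose A) ` C0 \<subseteq> C0"
    proof
      fix y assume "y \<in> (*v) (transpose A) ` C0"
      then obtain x where x: "x \<in> C0" "y = transpose A *v x" by blast
      then obtain z where "z \<in> C0" "x = A *v z" using assms(2) by blast
      then show "y \<in> C0" using x TA by simp
    qed
    show "C0 \<subseteq> (*v) (transpose A) ` C0"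
    proof
      fix z assume "z \<in> C0"
      then have "A *v z \<in> C0" using assms(2) by blast
      then show "z \<in> (*v) (transpose A) ` C0" using TA[of z] by (metis image_eqI)
    qed
  qed
qed

lemma near_identity_element:
  fixes C0 :: "(real^3) set"
  assumes infG: "infinite G" and Gsub: "G \<subseteq> {A. orthogonal_matrix A \<and> (*v) A ` C0 = C0}"
    and d: "\<delta> > 0"
  shows "\<exists>R. orthogonal_matrix R \<and> (*v) R ` C0 = C0 \<and> R \<noteq> mat 1 \<and> (\<forall>x. norm (R *v x - x) \<le> \<delta> * norm x)"
proof -
  have "bounded G" using Gsub orth_mat_bounded bounded_subset by blast
  then obtain X where X: "X islimpt G" using bounded_infinite_imp_islimpt[of G G] infG by blast
  define e where "e = \<delta> / 18"
  have e0: "e > 0" using d by (simp add: e_def)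
  obtain A where A: "A \<in> G" "A \<noteq> X" "dist A X < e" using X e0 unfolding islimpt_approachable by blast
  have "dist A X > 0" using A by simp
  then obtain B where B: "B \<in> G" "B \<noteq> X" "dist B X < min e (dist A X)"
    using X unfolding islimpt_approachable by (metis min_less_iff_conj e0)
  have AB: "A \<noteq> B" using B by auto
  have dAB: "norm (B - A) < 2 * e"
    using A B dist_triangle[of B A X] by (simp add: dist_norm norm_minus_commute)
  have oA: "orthogonal_matrix A" "(*v) A ` C0 = C0" and oB: "orthogonal_matrix B" "(*v) B ` C0 = C0"
    using A B Gsub by auto
  define R where "R = transpose A ** B"
  have oR: "orthogonal_matrix R" unfolding R_def using oA oB by (simp add: orthogonal_matrix_mul)
  have Rx: "R *v x = transpose A *v (B *v x)" for x by (simp add: R_def matrix_vector_mul_assoc)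
  have "(*v) R ` C0 = (*v) (transpose A) ` ((*v) B ` C0)" by (auto simp: Rx image_iff)
  then have RC: "(*v) R ` C0 = C0" using oB(2) orth_preserve_inv[OF oA] by simp
  have RI: "R \<noteq> mat 1"
  proof
    assume "R = mat 1"
    then have "A ** R = A" by simp
    moreover have "A ** R = B" unfolding R_def using oA(1)
      by (metis matrix_mul_assoc matrix_mul_lid orthogonal_matrix_def)
    ultimately show False using AB by simp
  qed
  have "norm (R *v x - x) \<le> \<delta> * norm x" for x
  proof -
    have "R *v x - x = transpose A *v ((B - A) *v x)"
      using oA(1) by (simp add: Rx matrix_vector_mult_diff_distrib matrix_vector_mult_diff_rdistrib
          matrix_vector_mul_assoc orthogonal_matrix_def)
    then have "norm (R *v x - x) = norm ((B - A) *v x)" using oA(1)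
      by (metis orth_norm orthogonal_matrix_transpose)
    also have "\<dots> \<le> 9 * norm (B - A) * norm x" by (rule mat_vec_bound)
    also have "\<dots> \<le> 9 * (2 * e) * norm x" using dAB by (intro mult_right_mono) auto
    also have "\<dots> = \<delta> * norm x" by (simp add: e_def)
    finally show ?thesis .
  qed
  then show ?thesis using oR RC RI by blast
qed



lemma rot_power_invariant:
  fixes R :: "real^3^3"
  assumes fr: "orthonormal3 u v w" and Rx: "\<forall>x. R *v x = rot u v w t x" and RC: "(*v) R ` C0 = C0"
    and x: "x \<in> C0"
  shows "rot u v w (real k * t) x \<in> C0"
proof -
  have "(rot u v w t ^^ k) x \<in> C0"
  proof (induction k)
    case 0 then show ?case using x by simp
  next
    case (Suc k)
    have "(rot u v w t ^^ Suc k) x = R *v ((rot u v w t ^^ k) x)" using Rx by simp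
    moreover have "R *v ((rot u v w t ^^ k) x) \<in> (*v) R ` C0" using Suc.IH by (rule imageI)
    ultimately show ?case using RC by simp
  qed
  then show ?thesis using rot_pow[OF fr] by simp
qed

lemma tendsto_rot [tendsto_intros]:
  assumes "(u \<longlongrightarrow> u0) F" "(v \<longlongrightarrow> v0) F" "(w \<longlongrightarrow> w0) F" "(t \<longlongrightarrow> t0) F"
  shows "((\<lambda>n. rot (u n) (v n) (w n) (t n) x) \<longlongrightarrow> rot u0 v0 w0 t0 x) F"
proof -
  have "((\<lambda>n. cos (t n)) \<longlongrightarrow> cos t0) F" by (rule isCont_tendsto_compose[OF isCont_cos assms(4)])
  moreover have "((\<lambda>n. sin (t n)) \<longlongrightarrow> sin t0) F" by (rule isCont_tendsto_compose[OF isCont_sin assms(4)])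
  ultimately show ?thesis unfolding rot_def by (intro tendsto_intros assms)
qed

lemma orthonormal3_limit:
  assumes "\<And>n. orthonormal3 (u n) (v n) (w n)" "u \<longlonglongrightarrow> u0" "v \<longlonglongrightarrow> v0" "w \<longlonglongrightarrow> w0"
  shows "orthonormal3 u0 v0 w0"
proof -
  have lim: "(\<lambda>n. a n \<bullet> b n) \<longlonglongrightarrow> a0 \<bullet> b0" if "a \<longlonglongrightarrow> a0" "b \<longlonglongrightarrow> b0" for a b :: "nat \<Rightarrow> real^3" and a0 b0 :: "real^3"
    using that by (intro tendsto_intros)
  have const: "a0 \<bullet> b0 = c" if "a \<longlonglongrightarrow> a0" "b \<longlonglongrightarrow> b0" "\<And>n. a n \<bullet> b n = c" for a b :: "nat \<Rightarrow> real^3" and a0 b0 c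
  proof -
    have "(\<lambda>n. c) \<longlonglongrightarrow> a0 \<bullet> b0" using lim[OF that(1,2)] that(3) by simp
    then show ?thesis by (rule LIMSEQ_unique[OF _ tendsto_const])
  qed
  have o: "u n \<bullet> u n = 1" "v n \<bullet> v n = 1" "w n \<bullet> w n = 1" "u n \<bullet> v n = 0" "u n \<bullet> w n = 0" "v n \<bullet> w n = 0" for n
    using assms(1)[of n] by (simp_all add: orthonormal3_def)
  show ?thesis unfolding orthonormal3_def
    using const[OF assms(2) assms(2) o(1)] const[OF assms(3) assms(3) o(2)] const[OF assms(4) assms(4) o(3)]
      const[OF assms(2) assms(3) o(4)] const[OF assms(2) assms(4) o(5)] const[OF assms(3) assms(4) o(6)]
    by simp
qed

lemma rotation_invariance:
  fixes C0 :: "(real^3) set"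
  assumes clC: "closed C0"
   and near: "\<And>\<delta>. \<delta> > 0 \<Longrightarrow> \<exists>R. orthogonal_matrix R \<and> (*v) R ` C0 = C0 \<and> R \<noteq> mat 1 \<and> (\<forall>x. norm (R *v x - x) \<le> \<delta> * norm x)"
  shows "\<exists>u v w. orthonormal3 u v w \<and> (\<forall>\<phi> x. 0 \<le> \<phi> \<longrightarrow> x \<in> C0 \<longrightarrow> rot u v w \<phi> x \<in> C0)"
proof -
  define dl where "dl n = inverse (real (Suc (Suc n)))" for n
  have dl0: "dl n > 0" "dl n < 1" for n by (auto simp: dl_def field_simps)
  have dlim: "dl \<longlonglongrightarrow> 0" unfolding dl_def by (rule LIMSEQ_Suc[OF LIMSEQ_inverse_real_of_nat])
  define P where "P n y \<longleftrightarrow> orthonormal3 (fst (fst y)) (fst (snd (fst y))) (snd (snd (fst y)))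
      \<and> 0 < snd y \<and> snd y \<le> pi \<and> 2 - 2 * cos (snd y) \<le> (dl n)\<^sup>2
      \<and> (\<forall>k x. x \<in> C0 \<longrightarrow> rot (fst (fst y)) (fst (snd (fst y))) (snd (snd (fst y))) (real k * snd y) x \<in> C0)" for n y
  have "\<exists>y. P n y" for n
  proof -
    obtain R where R: "orthogonal_matrix R" "(*v) R ` C0 = C0" "R \<noteq> mat 1" "\<forall>x. norm (R *v x - x) \<le> dl n * norm x"
      using near[OF dl0(1)] by blast
    obtain u v w t where uvw: "orthonormal3 u v w" "0 < t" "t \<le> pi" "2 - 2 * cos t \<le> (dl n)\<^sup>2"
        "\<forall>x. R *v x = rot u v w t x"
      using near_id_rotation[OF R(1) R(4) less_imp_le[OF dl0(1)] dl0(2) R(3)] by blast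
    have "P n ((u, v, w), t)" unfolding P_def
      using uvw rot_power_invariant[OF uvw(1) uvw(5) R(2)] by auto
    then show ?thesis by blast
  qed
  then obtain Y where Y: "\<And>n. P n (Y n)" by metis
  define Fr where "Fr n = fst (Y n)" for n
  define th where "th n = snd (Y n)" for n
  define K where "K = cball (0::real^3) 1 \<times> cball (0::real^3) 1 \<times> cball (0::real^3) 1"
  have fr: "orthonormal3 (fst (Fr n)) (fst (snd (Fr n))) (snd (snd (Fr n)))" for n
    using Y[of n] by (simp add: P_def Fr_def)
  have th: "0 < th n" "th n \<le> pi" "2 - 2 * cos (th n) \<le> (dl n)\<^sup>2" for n
    using Y[of n] by (simp_all add: P_def th_def)
  have inv: "x \<in> C0 \<Longrightarrow> rot (fst (Fr n)) (fst (snd (Fr n))) (snd (snd (Fr n))) (real k * th n) x \<in> C0" for n k x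
    using Y[of n] by (simp add: P_def Fr_def th_def)
  have "Fr n \<in> K" for n
  proof -
    obtain a b c where abc: "Fr n = (a, b, c)" by (metis prod_cases3)
    show ?thesis using fr[of n] unfolding K_def orthonormal3_def abc
      by (auto simp: norm_eq_1[symmetric] mem_cball dist_norm)
  qed
  moreover have "seq_compact K" unfolding K_def by (intro compact_imp_seq_compact compact_Times compact_cball)
  ultimately obtain L r where Lr: "strict_mono r" "(Fr \<circ> r) \<longlonglongrightarrow> L"
    using seq_compactE[of K Fr] by blast
  define u where "u = fst L"
  define v where "v = fst (snd L)"
  define w where "w = snd (snd L)"
  define un where "un n = fst (Fr (r n))" for n
  define vn where "vn n = fst (snd (Fr (r n)))" for n
  define wn where "wn n = snd (snd (Fr (r n)))" for n
  have lu: "un \<longlonglongrightarrow> u" unfolding un_def u_def using tendsto_fst[OF Lr(2)] by (simp add: o_def)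
  have lv: "vn \<longlonglongrightarrow> v" unfolding vn_def v_def using tendsto_fst[OF tendsto_snd[OF Lr(2)]] by (simp add: o_def)
  have lw: "wn \<longlonglongrightarrow> w" unfolding wn_def w_def using tendsto_snd[OF tendsto_snd[OF Lr(2)]] by (simp add: o_def)
  have frL: "orthonormal3 u v w"
    by (rule orthonormal3_limit[OF _ lu lv lw]) (simp add: un_def vn_def wn_def fr)
  define tn where "tn n = th (r n)" for n
  have dlr: "(\<lambda>n. dl (r n)) \<longlonglongrightarrow> 0" using LIMSEQ_subseq_LIMSEQ[OF dlim Lr(1)] by (simp add: o_def)
  have cos_lim: "(\<lambda>n. cos (tn n)) \<longlonglongrightarrow> 1"
  proof (rule tendsto_sandwich)
    show "\<forall>\<^sub>F n in sequentially. 1 - (dl (r n))\<^sup>2 / 2 \<le> cos (tn n)"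
    proof (intro always_eventually allI)
      fix n show "1 - (dl (r n))\<^sup>2 / 2 \<le> cos (tn n)" using th(3)[of "r n"] by (simp add: tn_def)
    qed
    show "\<forall>\<^sub>F n in sequentially. cos (tn n) \<le> 1" by simp
    have "(\<lambda>n. 1 - (dl (r n))\<^sup>2 / 2) \<longlonglongrightarrow> 1 - 0\<^sup>2 / 2"
      by (intro tendsto_intros dlr) simp_all
    then show "(\<lambda>n. 1 - (dl (r n))\<^sup>2 / 2) \<longlonglongrightarrow> 1" by simp
  qed simp
  have "(\<lambda>n. arccos (cos (tn n))) \<longlonglongrightarrow> arccos 1"
    by (rule continuous_on_tendsto_compose[OF continuous_on_arccos' cos_lim]) auto
  moreover have "arccos (cos (tn n)) = tn n" for n using th[of "r n"] by (simp add: tn_def arccos_cos)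
  ultimately have tlim: "tn \<longlonglongrightarrow> 0" by simp
  have "rot u v w \<phi> x \<in> C0" if phi: "0 \<le> \<phi>" and x: "x \<in> C0" for \<phi> x
  proof -
    define kn where "kn n = nat \<lfloor>\<phi> / tn n\<rfloor>" for n
    define an where "an n = real (kn n) * tn n" for n
    have tpos: "tn n > 0" for n using th by (simp add: tn_def)
    have ab: "\<phi> - tn n \<le> an n" "an n \<le> \<phi>" for n
    proof -
      have "0 \<le> \<phi> / tn n" using phi tpos[of n] by simp
      then have kr: "real (kn n) = of_int \<lfloor>\<phi> / tn n\<rfloor>" by (simp add: kn_def)
      have f1: "of_int \<lfloor>\<phi> / tn n\<rfloor> \<le> \<phi> / tn n" and f2: "\<phi> / tn n < of_int \<lfloor>\<phi> / tn n\<rfloor> + 1" by linarith+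
      have "real (kn n) * tn n \<le> \<phi>" by (metis f1 kr tpos pos_le_divide_eq)
      moreover have "\<phi> < (real (kn n) + 1) * tn n" by (metis f2 kr tpos pos_divide_less_eq)
      ultimately have "real (kn n) * tn n \<le> \<phi>" "\<phi> < (real (kn n) + 1) * tn n" by auto
      then show "\<phi> - tn n \<le> an n" "an n \<le> \<phi>" by (simp_all add: an_def algebra_simps)
    qed
    have alim: "an \<longlonglongrightarrow> \<phi>"
    proof (rule tendsto_sandwich)
      show "\<forall>\<^sub>F n in sequentially. \<phi> - tn n \<le> an n" by (rule always_eventually) (use ab in blast)
      show "\<forall>\<^sub>F n in sequentially. an n \<le> \<phi>" by (rule always_eventually) (use ab in blast)
      show "(\<lambda>n. \<phi> - tn n) \<longlonglongrightarrow> \<phi>" using tendsto_diff[OF tendsto_const tlim] by simp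
    qed simp
    have lim: "(\<lambda>n. rot (un n) (vn n) (wn n) (an n) x) \<longlonglongrightarrow> rot u v w \<phi> x"
      by (rule tendsto_rot[OF lu lv lw alim])
    have mem: "rot (un n) (vn n) (wn n) (an n) x \<in> C0" for n
      unfolding un_def vn_def wn_def an_def tn_def by (rule inv[OF x])
    show ?thesis by (rule closed_sequentially[OF clC mem lim])
  qed
  then show ?thesis using frL by blast
qed



lemma rot_eq_iff:
  assumes fr: "orthonormal3 u v w" and ab: "(x0 \<bullet> v)\<^sup>2 + (x0 \<bullet> w)\<^sup>2 > 0"
  shows "rot u v w s x0 = rot u v w t x0 \<longleftrightarrow> cos (s - t) = 1"
proof
  define a where "a = x0 \<bullet> v"
  define b where "b = x0 \<bullet> w"
  assume eq: "rot u v w s x0 = rot u v w t x0"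
  have E1: "cos s * a - sin s * b = cos t * a - sin t * b"
    using arg_cong[where f="\<lambda>z. z \<bullet> v", OF eq] by (simp add: rot_inner[OF fr] a_def b_def)
  have E2: "sin s * a + cos s * b = sin t * a + cos t * b"
    using arg_cong[where f="\<lambda>z. z \<bullet> w", OF eq] by (simp add: rot_inner[OF fr] a_def b_def)
  have "(a\<^sup>2 + b\<^sup>2) * cos (s - t) = (cos s * a - sin s * b) * (cos t * a - sin t * b) + (sin s * a + cos s * b) * (sin t * a + cos t * b)"
    by (simp add: cos_diff power2_eq_square algebra_simps)
  also have "\<dots> = (cos t * a - sin t * b)\<^sup>2 + (sin t * a + cos t * b)\<^sup>2"
    by (simp only: E1 E2 power2_eq_square)
  also have "\<dots> = a\<^sup>2 + b\<^sup>2"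
    using sin_cos_squared_add[of t] by algebra
  finally have "(a\<^sup>2 + b\<^sup>2) * cos (s - t) = (a\<^sup>2 + b\<^sup>2) * 1" by simp
  moreover have "a\<^sup>2 + b\<^sup>2 \<noteq> 0" using ab unfolding a_def b_def by (rule less_imp_neq[THEN not_sym])
  ultimately show "cos (s - t) = 1" by (metis mult_left_cancel)
next
  assume c1: "cos (s - t) = 1"
  have "(sin (s - t))\<^sup>2 = 0" using sin_cos_squared_add[of "s - t"] c1 by simp
  then have s0: "sin (s - t) = 0" by simp
  have "s = t + (s - t)" by simp
  then have "cos s = cos t" "sin s = sin t"
    by (metis c1 s0 cos_add sin_add mult_1_right mult_zero_right diff_zero add_0_right)+
  then show "rot u v w s x0 = rot u v w t x0" by (simp add: rot_def)
qed

lemma circle_param: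
  fixes p x0 :: "real^3"
  assumes fr: "orthonormal3 u v w" and ab: "(x0 \<bullet> v)\<^sup>2 + (x0 \<bullet> w)\<^sup>2 > 0"
  defines "g \<equiv> \<lambda>\<phi>. rot u v w \<phi> x0 + p"
  shows "periodic_inj (2 * pi) g" "continuous_on UNIV g"
    "range g = {z. dist z (p + (x0 \<bullet> u) *\<^sub>R u) = sqrt ((x0 \<bullet> v)\<^sup>2 + (x0 \<bullet> w)\<^sup>2)
                   \<and> (z - (p + (x0 \<bullet> u) *\<^sub>R u)) \<bullet> u = 0}"
proof -
  show "periodic_inj (2 * pi) g"
    unfolding periodic_inj_def g_def
    by (simp add: rot_eq_iff[OF fr ab] cos_one_2pi_int mult.assoc)
  show "continuous_on UNIV g" unfolding g_def rot_def by (intro continuous_intros)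
  note o = orth_facts[OF fr]
  define a where "a = x0 \<bullet> v"
  define b where "b = x0 \<bullet> w"
  define h where "h = x0 \<bullet> u"
  define \<rho> where "\<rho> = sqrt (a\<^sup>2 + b\<^sup>2)"
  have rho0: "\<rho> > 0" using ab by (simp add: \<rho>_def a_def b_def)
  have gform: "g \<phi> - (p + h *\<^sub>R u) = (cos \<phi> * a - sin \<phi> * b) *\<^sub>R v + (sin \<phi> * a + cos \<phi> * b) *\<^sub>R w" for \<phi>
    by (simp add: g_def rot_def a_def b_def h_def algebra_simps)
  have nrm: "norm (\<alpha> *\<^sub>R v + \<beta> *\<^sub>R w) = sqrt (\<alpha>\<^sup>2 + \<beta>\<^sup>2)" for \<alpha> \<beta>
    using o by (simp add: norm_eq_sqrt_inner inner_add_left inner_add_right power2_eq_square)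
  have "range g = {z. dist z (p + h *\<^sub>R u) = \<rho> \<and> (z - (p + h *\<^sub>R u)) \<bullet> u = 0}"
  proof
    show "range g \<subseteq> {z. dist z (p + h *\<^sub>R u) = \<rho> \<and> (z - (p + h *\<^sub>R u)) \<bullet> u = 0}"
    proof
      fix z assume "z \<in> range g"
      then obtain \<phi> where zg: "z = g \<phi>" by blast
      have "(cos \<phi> * a - sin \<phi> * b)\<^sup>2 + (sin \<phi> * a + cos \<phi> * b)\<^sup>2 = a\<^sup>2 + b\<^sup>2"
        using sin_cos_squared_add[of \<phi>] by algebra
      then have "dist (g \<phi>) (p + h *\<^sub>R u) = \<rho>"
        unfolding dist_norm gform nrm \<rho>_def by simp
      moreover have "(g \<phi> - (p + h *\<^sub>R u)) \<bullet> u = 0" unfolding gform using o by (simp add: inner_add_left)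
      ultimately show "z \<in> {z. dist z (p + h *\<^sub>R u) = \<rho> \<and> (z - (p + h *\<^sub>R u)) \<bullet> u = 0}" using zg by simp
    qed
    show "{z. dist z (p + h *\<^sub>R u) = \<rho> \<and> (z - (p + h *\<^sub>R u)) \<bullet> u = 0} \<subseteq> range g"
    proof
      fix z assume "z \<in> {z. dist z (p + h *\<^sub>R u) = \<rho> \<and> (z - (p + h *\<^sub>R u)) \<bullet> u = 0}"
      then have dz: "dist z (p + h *\<^sub>R u) = \<rho>" and zu: "(z - (p + h *\<^sub>R u)) \<bullet> u = 0" by auto
      define y where "y = z - (p + h *\<^sub>R u)"
      have yu: "y \<bullet> u = 0" using zu by (simp add: y_def)
      have ye: "y = (y \<bullet> v) *\<^sub>R v + (y \<bullet> w) *\<^sub>R w" by (rule perp_expand(1)[OF fr yu])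
      have "norm y = \<rho>" using dz by (simp add: y_def dist_norm)
      then have "sqrt ((y \<bullet> v)\<^sup>2 + (y \<bullet> w)\<^sup>2) = \<rho>" using ye nrm by metis
      then have yy: "(y \<bullet> v)\<^sup>2 + (y \<bullet> w)\<^sup>2 = \<rho>\<^sup>2" by (metis real_sqrt_ge_0_iff real_sqrt_pow2 zero_le_power2 add_nonneg_nonneg)
      have ab2: "a\<^sup>2 + b\<^sup>2 = \<rho>\<^sup>2" by (simp add: \<rho>_def)
      have "(a / \<rho>)\<^sup>2 + (b / \<rho>)\<^sup>2 = 1" using ab2 rho0 by (simp add: power_divide field_simps)
      then obtain \<alpha> where al: "a / \<rho> = cos \<alpha>" "b / \<rho> = sin \<alpha>" using sincos_total_2pi by metis
      have "((y \<bullet> v) / \<rho>)\<^sup>2 + ((y \<bullet> w) / \<rho>)\<^sup>2 = 1" using yy rho0 by (simp add: power_divide field_simps)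
      then obtain \<beta> where be: "(y \<bullet> v) / \<rho> = cos \<beta>" "(y \<bullet> w) / \<rho> = sin \<beta>" using sincos_total_2pi by metis
      have a': "a = \<rho> * cos \<alpha>" "b = \<rho> * sin \<alpha>" using al rho0 by (simp_all add: field_simps)
      have b': "y \<bullet> v = \<rho> * cos \<beta>" "y \<bullet> w = \<rho> * sin \<beta>" using be rho0 by (simp_all add: field_simps)
      define \<phi> where "\<phi> = \<beta> - \<alpha>"
      have c1: "cos \<phi> * a - sin \<phi> * b = y \<bullet> v"
        unfolding a' b' \<phi>_def cos_diff sin_diff using sin_cos_squared_add[of \<alpha>] by algebra
      have c2: "sin \<phi> * a + cos \<phi> * b = y \<bullet> w"
        unfolding a' b' \<phi>_def cos_diff sin_diff using sin_cos_squared_add[of \<alpha>] by algebra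
      have "g \<phi> - (p + h *\<^sub>R u) = y" using gform[of \<phi>] c1 c2 ye by simp
      then have "z = g \<phi>" by (simp add: y_def)
      then show "z \<in> range g" by simp
    qed
  qed
  then show "range g = {z. dist z (p + (x0 \<bullet> u) *\<^sub>R u) = sqrt ((x0 \<bullet> v)\<^sup>2 + (x0 \<bullet> w)\<^sup>2)
                   \<and> (z - (p + (x0 \<bullet> u) *\<^sub>R u)) \<bullet> u = 0}"
    by (simp add: h_def \<rho>_def a_def b_def)
qed



theorem propositionA3:
  fixes c :: "real \<Rightarrow> real^3" and l :: real
  assumes "l > 0"
    and "embedded_closed_curve l c"
    and "smooth_curve c"
    and "regular_curve c"
    and "\<not> is_circle (range c)"
  shows "finite (symmetries (range c))"
proof (rule ccontr)
  assume inf: "infinite (symmetries (range c))"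
  note l0 = assms(1)
  have pc: "periodic_inj l c" using assms(2) by (simp add: periodic_inj_def embedded_closed_curve_def)
  have cc: "continuous_on UNIV c"
  proof -
    have "c differentiable (at t)" for t
      using assms(3) unfolding smooth_curve_def by (metis curve_deriv_def funpow_0)
    then show ?thesis by (simp add: continuous_at_imp_continuous_on differentiable_imp_continuous_within)
  qed
  define C where "C = range c"
  have compC: "compact C" unfolding C_def periodic_inj_range[OF pc l0, of 0]
    by (rule compact_continuous_image[OF continuous_on_subset[OF cc]]) auto
  have neC: "C \<noteq> {}" by (simp add: C_def)
  obtain p where p: "\<And>T. isometry T \<Longrightarrow> T ` C = C \<Longrightarrow> T p = p" using cheb_center[OF compC neC] by blast
  define C0 where "C0 = (\<lambda>x. x - p) ` C"
  have C0C: "z \<in> C0 \<longleftrightarrow> z + p \<in> C" for z by (force simp: C0_def)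
  have clC0: "closed C0" unfolding C0_def
    by (intro compact_imp_closed compact_continuous_image compC continuous_intros)
  define Q where "Q T = (\<lambda>x. T (x + p) - p)" for T :: "real^3 \<Rightarrow> real^3"
  define M where "M T = matrix (Q T)" for T
  have symQ: "orthogonal_transformation (Q T)" "\<forall>x. M T *v x = Q T x" "(*v) (M T) ` C0 = C0"
    if T: "T \<in> symmetries C" for T
  proof -
    have iso: "isometry T" and TC: "T ` C = C" using T by (auto simp: symmetries_def)
    have "Q T 0 = 0" using p[OF iso TC] by (simp add: Q_def)
    moreover have "dist (Q T x) (Q T y) = dist x y" for x y
      using iso unfolding isometry_def Q_def by (simp add: dist_norm)
    ultimately show ot: "orthogonal_transformation (Q T)" by (simp add: orthogonal_transformation_isometry)
    then have "linear (Q T)" by (simp add: orthogonal_transformation_def)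
    then show Mx: "\<forall>x. M T *v x = Q T x" by (simp add: M_def matrix_works)
    have "(*v) (M T) ` C0 = Q T ` C0" using Mx by (simp add: image_def)
    also have "\<dots> = (\<lambda>x. x - p) ` (T ` C)" by (simp add: Q_def C0_def image_image)
    also have "\<dots> = C0" using TC by (simp add: C0_def)
    finally show "(*v) (M T) ` C0 = C0" .
  qed
  have orthM: "orthogonal_matrix (M T)" if "T \<in> symmetries C" for T
    using symQ(1)[OF that] by (simp add: orthogonal_transformation_matrix M_def)
  have injM: "inj_on M (symmetries C)"
  proof (rule inj_onI)
    fix T1 T2 assume T: "T1 \<in> symmetries C" "T2 \<in> symmetries C" "M T1 = M T2"
    have "T1 y = T2 y" for y
    proof -
      have "Q T1 (y - p) = Q T2 (y - p)" using symQ(2)[OF T(1)] symQ(2)[OF T(2)] T(3) by metis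
      then show ?thesis by (simp add: Q_def)
    qed
    then show "T1 = T2" by blast
  qed
  have infG: "infinite (M ` symmetries C)" using inf injM finite_imageD by (auto simp: C_def)
  have Gsub: "M ` symmetries C \<subseteq> {A. orthogonal_matrix A \<and> (*v) A ` C0 = C0}"
    using orthM symQ(3) by auto
  obtain u v w where fr: "orthonormal3 u v w"
    and rinv: "\<And>\<phi> x. 0 \<le> \<phi> \<Longrightarrow> x \<in> C0 \<Longrightarrow> rot u v w \<phi> x \<in> C0"
    using rotation_invariance[OF clC0 near_identity_element[OF infG Gsub]] by blast
  show False
  proof (cases "\<exists>x0\<in>C0. (x0 \<bullet> v)\<^sup>2 + (x0 \<bullet> w)\<^sup>2 > 0")
    case False
    then have axis: "x = (x \<bullet> u) *\<^sub>R u" if "x \<in> C0" for x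
    proof -
      have "(x \<bullet> v)\<^sup>2 + (x \<bullet> w)\<^sup>2 = 0" using False that
        by (metis add_nonneg_nonneg linorder_neqE_linordered_idom not_less zero_le_power2)
      then have "x \<bullet> v = 0" "x \<bullet> w = 0" by (simp_all add: sum_power2_eq_zero_iff)
      then show ?thesis using frame_expand[OF fr, of x] by simp
    qed
    define P where "P y = (y - p) \<bullet> u" for y
    have "continuous_on (range c) P" unfolding P_def by (intro continuous_intros)
    moreover have "inj_on P (range c)"
    proof (rule inj_onI)
      fix y1 y2 assume y: "y1 \<in> range c" "y2 \<in> range c" "P y1 = P y2"
      have "y1 - p \<in> C0" "y2 - p \<in> C0" using y C0C by (auto simp: C_def)
      then have "y1 - p = (P y1) *\<^sub>R u" "y2 - p = (P y2) *\<^sub>R u" using axis by (auto simp: P_def)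
      then show "y1 = y2" using y(3) by (metis diff_add_cancel)
    qed
    ultimately show False by (rule periodic_inj_no_line[OF pc l0 cc])
  next
    case True
    then obtain x0 where x0: "x0 \<in> C0" and ab: "(x0 \<bullet> v)\<^sup>2 + (x0 \<bullet> w)\<^sup>2 > 0" by blast
    define g where "g = (\<lambda>\<phi>. rot u v w \<phi> x0 + p)"
    note gp = circle_param[OF fr ab, of p, folded g_def]
    have "range g \<subseteq> range c"
    proof
      fix z assume "z \<in> range g"
      then obtain \<phi> where z: "z = g \<phi>" by blast
      obtain \<phi>' where \<phi>': "0 \<le> \<phi>'" "g \<phi>' = g \<phi>"
        using periodic_inj_shift[OF gp(1), of 0 \<phi>] by (auto simp: pi_gt_zero)
      have "rot u v w \<phi>' x0 \<in> C0" by (rule rinv[OF \<phi>'(1) x0])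
      then have "g \<phi>' \<in> C" using C0C by (simp add: g_def)
      then show "z \<in> range c" using z \<phi>'(2) by (simp add: C_def)
    qed
    then have "range c \<subseteq> range g" by (intro periodic_inj_sub_eq[OF pc l0 cc gp(1) _ gp(2)]) simp_all
    with \<open>range g \<subseteq> range c\<close> have "range c = range g" by blast
    then have "is_circle (range c)" unfolding is_circle_def gp(3)
      using ab fr by (intro exI[of _ "p + (x0 \<bullet> u) *\<^sub>R u"] exI[of _ "sqrt ((x0 \<bullet> v)\<^sup>2 + (x0 \<bullet> w)\<^sup>2)"] exI[of _ u])
        (auto simp: orthonormal3_def)
    with assms(5) show False by simp
  qed
qed


end
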